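(* Let $X$ be a uniformly convex and uniformly smooth Banach space, $x\in X$, and $(x_k)\subset X$ a bounded sequence with $\liminf_k\|x_k-x\|>0$. Then $x_k\rightharpoondown x$ if and only if $(x_k-x)^*\rightharpoonup0$ weakly in $X^*$.
   Context: $x_k\rightharpoondown x$ (Δ-convergence) means: for every $y\in X$, $\limsup_{k\to\infty}(\|x_k-x\|-\|x_k-y\|)\le0$. For $z\in X\setminus\{0\}$, $z^*$ denotes the unique element of $X^*$ with $\|z^*\|=1$ and $\langle z^*,z\rangle=\|z\|$ (unique since $X^*$ is strictly convex); $(x_k-x)^*$ is defined for all large $k$. *)

theory Defs
  imports "HOL-Analysis.Analysis"
begin

(* Real Banach spaces are modelled by the type class banach; the dual space
  X* is the type of bounded linear functionals 'a \<Rightarrow>\<^sub>L real, and X** is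
  ('a \<Rightarrow>\<^sub>L real) \<Rightarrow>\<^sub>L real.*)

definition uniformly_convex :: "'a::real_normed_vector itself \<Rightarrow> bool" where
  "uniformly_convex _ \<longleftrightarrow>
     (\<forall>\<epsilon>>0. \<exists>\<delta>>0. \<forall>x y::'a. norm x \<le> 1 \<and> norm y \<le> 1 \<and> norm (x - y) \<ge> \<epsilon>
        \<longrightarrow> norm ((x + y) /\<^sub>R 2) \<le> 1 - \<delta>)"

(* Uniform smoothness: the modulus of smoothness
  rho(t) = sup {(norm (x + t y) + norm (x - t y))/2 - 1 : norm x = norm y = 1}
  satisfies rho(t)/t \<rightarrow> 0 as t \<rightarrow> 0+ (written out in epsilon-delta form).*)
definition uniformly_smooth :: "'a::real_normed_vector itself \<Rightarrow> bool" where
  "uniformly_smooth _ \<longleftrightarrow>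
     (\<forall>\<epsilon>>0. \<exists>\<delta>>0. \<forall>t. 0 < t \<and> t < \<delta> \<longrightarrow>
        (\<forall>x y::'a. norm x = 1 \<and> norm y = 1 \<longrightarrow>
           (norm (x + t *\<^sub>R y) + norm (x - t *\<^sub>R y)) / 2 - 1 \<le> \<epsilon> * t))"

definition dual_elem :: "'a::real_normed_vector \<Rightarrow> ('a \<Rightarrow>\<^sub>L real)" where
  "dual_elem z = (THE f. norm f = 1 \<and> blinfun_apply f z = norm z)"

definition Delta_converges :: "(nat \<Rightarrow> 'a::real_normed_vector) \<Rightarrow> 'a \<Rightarrow> bool" where
  "Delta_converges xs x \<longleftrightarrow>
     (\<forall>y. limsup (\<lambda>k. ereal (norm (xs k - x) - norm (xs k - y))) \<le> 0)"

definition weakly_converges :: "(nat \<Rightarrow> 'b::real_normed_vector) \<Rightarrow> 'b \<Rightarrow> bool" where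
  "weakly_converges fs f \<longleftrightarrow>
     (\<forall>\<Psi> :: 'b \<Rightarrow>\<^sub>L real. (\<lambda>k. blinfun_apply \<Psi> (fs k)) \<longlonglongrightarrow> blinfun_apply \<Psi> f)"

end

theory Submission
  imports Defs
begin


definition dq :: "'a::real_normed_vector \<Rightarrow> 'a \<Rightarrow> real \<Rightarrow> real" where
  "dq z v t = (norm (z + t *\<^sub>R v) - norm z) / t"

definition DD :: "'a::real_normed_vector \<Rightarrow> 'a \<Rightarrow> real" where
  "DD z v = Inf (dq z v ` {0<..})"

lemma dq_lower: "0 < t \<Longrightarrow> - norm v \<le> dq z v t"
proof -
  assume t: "0 < t"
  have "norm z \<le> norm (z + t *\<^sub>R v) + norm (t *\<^sub>R v)"
    by (metis add_diff_cancel norm_triangle_ineq4)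
  hence "- t * norm v \<le> norm (z + t *\<^sub>R v) - norm z" using t by simp
  thus ?thesis using t unfolding dq_def by (simp add: le_divide_eq mult.commute)
qed

lemma dq_upper: "0 < t \<Longrightarrow> dq z v t \<le> norm v"
proof -
  assume t: "0 < t"
  have "norm (z + t *\<^sub>R v) \<le> norm z + t * norm v"
    using norm_triangle_ineq[of z "t *\<^sub>R v"] t by simp
  thus ?thesis using t unfolding dq_def by (simp add: divide_le_eq mult.commute)
qed

lemma bdd_dq: "bdd_below (dq z v ` {0<..})"
  using dq_lower by (auto intro!: bdd_belowI[where m="- norm v"])

lemma DD_le: "0 < t \<Longrightarrow> DD z v \<le> dq z v t"
  unfolding DD_def by (rule cInf_lower[OF _ bdd_dq]) auto

lemma DD_ge: "(\<And>t. 0 < t \<Longrightarrow> c \<le> dq z v t) \<Longrightarrow> c \<le> DD z v"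
  unfolding DD_def by (rule cInf_greatest) auto

lemma DD_bound: "\<bar>DD z v\<bar> \<le> norm v"
proof -
  have "DD z v \<le> norm v" using DD_le[of 1 z v] dq_upper[where t=1 and z=z and v=v] by simp
  moreover have "- norm v \<le> DD z v" by (rule DD_ge) (rule dq_lower)
  ultimately show ?thesis by simp
qed

lemma DD_self: "DD z z = norm z"
proof -
  have "dq z z t = norm z" if "0 < t" for t
  proof -
    have "z + t *\<^sub>R z = (1 + t) *\<^sub>R z" by (simp add: algebra_simps)
    hence "norm (z + t *\<^sub>R z) = (1 + t) * norm z" using that by simp
    thus ?thesis using that unfolding dq_def by (simp add: field_simps)
  qed
  hence "DD z z \<le> norm z" using DD_le[of 1 z z] by simp
  moreover have "norm z \<le> DD z z" by (rule DD_ge) (simp add: \<open>\<And>t. 0 < t \<Longrightarrow> dq z z t = norm z\<close>)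
  ultimately show ?thesis by simp
qed

lemma dq_sub: assumes s: "0 < s" and s': "0 < s'"
  shows "dq z (v + w) (s * s' / (s + s')) \<le> dq z v s + dq z w s'"
proof -
  define t where "t = s * s' / (s + s')"
  define a where "a = s' / (s + s')"
  have t: "0 < t" using s s' by (simp add: t_def)
  have a0: "0 < a" "a < 1" using s s' by (auto simp: a_def field_simps)
  have ta1: "a * s = t" using s s' by (simp add: t_def a_def)
  have "1 - a = s / (s + s')" using s s' by (simp add: a_def field_simps)
  hence ta2: "(1 - a) * s' = t" using s s' by (simp add: t_def)
  have eq: "z + t *\<^sub>R (v + w) = a *\<^sub>R (z + s *\<^sub>R v) + (1 - a) *\<^sub>R (z + s' *\<^sub>R w)"
  proof -
    have "a *\<^sub>R (z + s *\<^sub>R v) + (1 - a) *\<^sub>R (z + s' *\<^sub>R w) = z + (a * s) *\<^sub>R v + ((1 - a) * s') *\<^sub>R w"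
      by (simp add: algebra_simps)
    thus ?thesis unfolding ta1 ta2 by (simp add: algebra_simps)
  qed
  have "norm (z + t *\<^sub>R (v + w)) \<le> a * norm (z + s *\<^sub>R v) + (1 - a) * norm (z + s' *\<^sub>R w)"
    unfolding eq using a0
    by (metis (no_types, lifting) abs_of_nonneg less_eq_real_def norm_scaleR norm_triangle_ineq diff_ge_0_iff_ge)
  hence "norm (z + t *\<^sub>R (v + w)) - norm z \<le> a * (norm (z + s *\<^sub>R v) - norm z) + (1 - a) * (norm (z + s' *\<^sub>R w) - norm z)"
    by (simp add: algebra_simps)
  also have "\<dots> = t * dq z v s + t * dq z w s'"
  proof -
    have "t * dq z v s = a * (norm (z + s *\<^sub>R v) - norm z)"
      unfolding dq_def ta1[symmetric] using s by simp
    moreover have "t * dq z w s' = (1 - a) * (norm (z + s' *\<^sub>R w) - norm z)"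
      unfolding dq_def ta2[symmetric] using s' by simp
    ultimately show ?thesis by simp
  qed
  finally show ?thesis using t unfolding dq_def t_def[symmetric] by (simp add: divide_le_eq algebra_simps)
qed

lemma DD_subadd: "DD z (v + w) \<le> DD z v + DD z w"
proof -
  have "DD z (v + w) - dq z w s' \<le> DD z v" if s': "0 < s'" for s'
  proof -
    have "DD z (v + w) - dq z w s' \<le> dq z v s" if s: "0 < s" for s
      using DD_le[of "s * s' / (s + s')" z "v + w"] dq_sub[OF s s', of z v w] s s' by simp
    thus ?thesis by (intro DD_ge) (simp add: algebra_simps)
  qed
  hence "DD z (v + w) - DD z v \<le> DD z w" by (intro DD_ge) (simp add: algebra_simps)
  thus ?thesis by simp
qed

lemma DD_zero: "DD z 0 = 0"
  using DD_bound[of z 0] by simp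

lemma DD_scale_pos: assumes c: "0 < c" shows "DD z (c *\<^sub>R v) = c * DD z v"
proof -
  have dqs: "dq z (c *\<^sub>R v) t = c * dq z v (c * t)" if "0 < t" for t
    using that c unfolding dq_def by (simp add: field_simps)
  have "DD z (c *\<^sub>R v) / c \<le> dq z v s" if "0 < s" for s
    using DD_le[of "s / c" z "c *\<^sub>R v"] dqs[of "s / c"] that c by (simp add: divide_le_eq mult.commute)
  hence 1: "DD z (c *\<^sub>R v) / c \<le> DD z v" by (rule DD_ge)
  have "c * DD z v \<le> dq z (c *\<^sub>R v) t" if "0 < t" for t
    using DD_le[of "c * t" z v] dqs[OF that] that c by simp
  hence 2: "c * DD z v \<le> DD z (c *\<^sub>R v)" by (rule DD_ge)
  show ?thesis using 1 2 c by (simp add: divide_le_eq mult.commute)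
qed

lemma US_sum:
  assumes US: "uniformly_smooth TYPE('a::real_normed_vector)" and e: "0 < e"
  obtains d where "0 < d" "\<And>z w t. (z::'a) \<noteq> 0 \<Longrightarrow> 0 < t \<Longrightarrow> t * norm w < d * norm z \<Longrightarrow>
     norm (z + t *\<^sub>R w) + norm (z - t *\<^sub>R w) \<le> 2 * norm z + 2 * e * t * norm w"
proof -
  from US e obtain d where d: "0 < d" and H: "\<And>t x y. 0 < t \<Longrightarrow> t < d \<Longrightarrow> norm (x::'a) = 1 \<Longrightarrow> norm (y::'a) = 1 \<Longrightarrow>
        (norm (x + t *\<^sub>R y) + norm (x - t *\<^sub>R y)) / 2 - 1 \<le> e * t"
    using US e unfolding uniformly_smooth_def by metis
  show ?thesis
  proof (rule that[OF d])
    fix z w :: 'a and t :: real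
    assume z: "z \<noteq> 0" and t: "0 < t" and small: "t * norm w < d * norm z"
    show "norm (z + t *\<^sub>R w) + norm (z - t *\<^sub>R w) \<le> 2 * norm z + 2 * e * t * norm w"
    proof (cases "w = 0")
      case True thus ?thesis by simp
    next
      case False
      define x where "x = z /\<^sub>R norm z"
      define y where "y = w /\<^sub>R norm w"
      define s where "s = t * norm w / norm z"
      have nz: "0 < norm z" and nw: "0 < norm w" using z False by auto
      have s: "0 < s" "s < d" using t nz nw small by (auto simp: s_def field_simps)
      have x1: "norm x = 1" "norm y = 1" using nz nw by (auto simp: x_def y_def)
      have "(norm (x + s *\<^sub>R y) + norm (x - s *\<^sub>R y)) / 2 - 1 \<le> e * s" using H[OF s x1] .
      moreover have "norm (x + s *\<^sub>R y) = norm (z + t *\<^sub>R w) / norm z" "norm (x - s *\<^sub>R y) = norm (z - t *\<^sub>R w) / norm z"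
      proof -
        have "x + s *\<^sub>R y = (z + t *\<^sub>R w) /\<^sub>R norm z" "x - s *\<^sub>R y = (z - t *\<^sub>R w) /\<^sub>R norm z"
          using nz nw by (auto simp: x_def y_def s_def algebra_simps divide_inverse)
        thus "norm (x + s *\<^sub>R y) = norm (z + t *\<^sub>R w) / norm z" "norm (x - s *\<^sub>R y) = norm (z - t *\<^sub>R w) / norm z"
          by (simp_all add: divide_inverse mult.commute)
      qed
      ultimately have "(norm (z + t *\<^sub>R w) / norm z + norm (z - t *\<^sub>R w) / norm z) / 2 - 1 \<le> e * (t * norm w / norm z)"
        by (simp add: s_def)
      hence "(norm (z + t *\<^sub>R w) + norm (z - t *\<^sub>R w)) / norm z \<le> (2 * norm z + 2 * e * t * norm w) / norm z"
        using nz by (simp add: field_simps)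
      thus ?thesis using nz by (simp add: divide_le_cancel)
    qed
  qed
qed

lemma DD_odd:
  assumes US: "uniformly_smooth TYPE('a::real_normed_vector)" and z: "(z::'a) \<noteq> 0"
  shows "DD z (- v) = - DD z v"
proof -
  have "0 \<le> DD z v + DD z (- v)" using DD_subadd[of z v "- v"] DD_zero[of z] by simp
  moreover have "DD z v + DD z (- v) \<le> 2 * e * norm v" if e: "0 < e" for e
  proof -
    obtain d where d: "0 < d" and H: "\<And>z w t. (z::'a) \<noteq> 0 \<Longrightarrow> 0 < t \<Longrightarrow> t * norm w < d * norm z \<Longrightarrow>
     norm (z + t *\<^sub>R w) + norm (z - t *\<^sub>R w) \<le> 2 * norm z + 2 * e * t * norm w"
      using US_sum[OF US e] by blast
    define t where "t = d * norm z / (norm v + 1)"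
    have nz: "0 < norm z" using z by simp
    have nv1: "0 < norm v + 1" using norm_ge_zero[of v] by linarith
    hence t: "0 < t" unfolding t_def using d nz by (intro divide_pos_pos mult_pos_pos) auto
    have "t * norm v < d * norm z"
    proof -
      have "t * norm v < t * (norm v + 1)" using t by simp
      also have "\<dots> = d * norm z" using nv1 by (simp add: t_def)
      finally show ?thesis .
    qed
    from H[OF z t this] have h: "norm (z + t *\<^sub>R v) + norm (z - t *\<^sub>R v) \<le> 2 * norm z + 2 * e * t * norm v" .
    have "DD z v + DD z (- v) \<le> dq z v t + dq z (- v) t" using DD_le[OF t, of z v] DD_le[OF t, of z "- v"] by simp
    also have "\<dots> = (norm (z + t *\<^sub>R v) + norm (z - t *\<^sub>R v) - 2 * norm z) / t"
      unfolding dq_def by (simp add: diff_divide_distrib add_divide_distrib)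
    also have "\<dots> \<le> 2 * e * norm v" using h t by (simp add: divide_le_eq mult.commute mult.left_commute)
    finally show ?thesis .
  qed
  hence "DD z v + DD z (- v) \<le> 0"
  proof -
    assume A: "\<And>e. 0 < e \<Longrightarrow> DD z v + DD z (- v) \<le> 2 * e * norm v"
    show ?thesis
    proof (rule ccontr)
      assume "\<not> ?thesis"
      hence p: "0 < DD z v + DD z (- v)" by simp
      define e where "e = (DD z v + DD z (- v)) / (4 * (norm v + 1))"
      have q: "0 < 4 * (norm v + 1)" by (smt (verit) norm_ge_zero)
      have e: "0 < e" using p q unfolding e_def by (rule divide_pos_pos)
      have en: "0 \<le> e * norm v" using e by simp
      have "4 * e * (norm v + 1) = 4 * (e * norm v) + 4 * e" by (simp add: algebra_simps)
      moreover have "2 * e * norm v = 2 * (e * norm v)" by simp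
      ultimately have "2 * e * norm v < 4 * e * (norm v + 1)" using e en by linarith
      also have "\<dots> = e * (4 * (norm v + 1))" by simp
      also have "\<dots> = DD z v + DD z (- v)" unfolding e_def using q
        by (metis less_irrefl nonzero_eq_divide_eq)
      finally show False using A[OF e] by simp
    qed
  qed
  ultimately show ?thesis by simp
qed

lemma DD_add:
  assumes US: "uniformly_smooth TYPE('a::real_normed_vector)" and z: "(z::'a) \<noteq> 0"
  shows "DD z (v + w) = DD z v + DD z w"
proof -
  have "DD z (- v + - w) \<le> DD z (- v) + DD z (- w)" by (rule DD_subadd)
  moreover have "DD z (- v + - w) = - DD z (v + w)" using DD_odd[OF US z, of "v + w"] by (simp add: minus_add_distrib)
  ultimately have "DD z v + DD z w \<le> DD z (v + w)"
    using DD_odd[OF US z, of v] DD_odd[OF US z, of w] by linarith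
  thus ?thesis using DD_subadd[of z v w] by simp
qed

lemma DD_scale:
  assumes US: "uniformly_smooth TYPE('a::real_normed_vector)" and z: "(z::'a) \<noteq> 0"
  shows "DD z (c *\<^sub>R v) = c * DD z v"
proof -
  consider "c > 0" | "c = 0" | "c < 0" by linarith
  thus ?thesis
  proof cases
    case 1 thus ?thesis by (rule DD_scale_pos)
  next
    case 2 thus ?thesis by (simp add: DD_zero)
  next
    case 3
    have "DD z (c *\<^sub>R v) = DD z (- ((- c) *\<^sub>R v))" by simp
    also have "\<dots> = - DD z ((- c) *\<^sub>R v)" by (rule DD_odd[OF US z])
    also have "\<dots> = - ((- c) * DD z v)" using DD_scale_pos[of "- c" z v] 3 by simp
    finally show ?thesis by simp
  qed
qed

lemma DD_bl:
  assumes US: "uniformly_smooth TYPE('a::real_normed_vector)" and z: "(z::'a) \<noteq> 0"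
  shows "bounded_linear (DD z)"
proof (rule bounded_linear_intro[where K=1])
  show "DD z (x + y) = DD z x + DD z y" for x y by (rule DD_add[OF US z])
  show "DD z (r *\<^sub>R x) = r *\<^sub>R DD z x" for r x using DD_scale[OF US z] by simp
  show "norm (DD z x) \<le> norm x * 1" for x using DD_bound[of z x] by simp
qed

lemma dual_elem_props:
  assumes US: "uniformly_smooth TYPE('a::real_normed_vector)" and z: "(z::'a) \<noteq> 0"
  shows "norm (dual_elem z) = 1" "blinfun_apply (dual_elem z) z = norm z"
proof -
  define F where "F = Blinfun (DD z)"
  have Fa: "blinfun_apply F = DD z" unfolding F_def by (rule bounded_linear_Blinfun_apply[OF DD_bl[OF US z]])
  have nz: "0 < norm z" using z by simp
  have F1: "norm F = 1"
  proof (rule antisym)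
    show "norm F \<le> 1"
    proof (rule norm_blinfun_bound)
      show "norm (blinfun_apply F x) \<le> 1 * norm x" for x using DD_bound[of z x] by (simp add: Fa)
    qed simp
    have "norm z \<le> norm F * norm z" using norm_blinfun[of F z] by (simp add: Fa DD_self)
    thus "1 \<le> norm F" using nz by simp
  qed
  have Fz: "blinfun_apply F z = norm z" by (simp add: Fa DD_self)
  have uniq: "g = F" if g: "norm g = 1 \<and> blinfun_apply g z = norm z" for g
  proof (rule blinfun_eqI)
    fix v
    have le: "blinfun_apply g u \<le> DD z u" for u
    proof (rule DD_ge)
      fix t :: real assume t: "0 < t"
      have "blinfun_apply g (z + t *\<^sub>R u) \<le> norm (z + t *\<^sub>R u)"
        using norm_blinfun[of g "z + t *\<^sub>R u"] g by simp
      hence "norm z + t * blinfun_apply g u \<le> norm (z + t *\<^sub>R u)"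
        using g by (simp add: blinfun.add_right blinfun.scaleR_right)
      thus "blinfun_apply g u \<le> dq z u t" using t unfolding dq_def by (simp add: le_divide_eq mult.commute)
    qed
    have "blinfun_apply g v \<le> DD z v" by (rule le)
    moreover have "- blinfun_apply g v \<le> - DD z v" using le[of "- v"] DD_odd[OF US z, of v]
      by (simp add: blinfun.minus_right)
    ultimately show "blinfun_apply g v = blinfun_apply F v" by (simp add: Fa)
  qed
  have "dual_elem z = F" unfolding dual_elem_def
  proof (rule the_equality)
    show "norm F = 1 \<and> blinfun_apply F z = norm z" using F1 Fz by simp
    show "g = F" if "norm g = 1 \<and> blinfun_apply g z = norm z" for g using uniq that by blast
  qed
  thus "norm (dual_elem z) = 1" "blinfun_apply (dual_elem z) z = norm z" using F1 Fz by auto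
qed



lemma norm_le_from_unit:
  fixes \<phi> :: "'b::real_normed_vector \<Rightarrow>\<^sub>L real"
  assumes B: "0 \<le> B" and H: "\<And>u. norm u = 1 \<Longrightarrow> \<bar>blinfun_apply \<phi> u\<bar> \<le> B"
  shows "norm \<phi> \<le> B"
proof (rule norm_blinfun_bound[OF B])
  fix x :: 'b
  show "norm (blinfun_apply \<phi> x) \<le> B * norm x"
  proof (cases "x = 0")
    case True thus ?thesis by simp
  next
    case False
    define u where "u = x /\<^sub>R norm x"
    have u: "norm u = 1" using False by (simp add: u_def)
    have "x = norm x *\<^sub>R u" using False by (simp add: u_def)
    hence "blinfun_apply \<phi> x = norm x * blinfun_apply \<phi> u"
      by (metis blinfun.scaleR_right real_scaleR_def)
    hence "norm (blinfun_apply \<phi> x) = norm x * \<bar>blinfun_apply \<phi> u\<bar>" by (simp add: abs_mult)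
    also have "\<dots> \<le> norm x * B" using H[OF u] by (simp add: mult_left_mono)
    finally show ?thesis by (simp add: mult.commute)
  qed
qed

lemma approx_norming:
  fixes \<phi> :: "'b::real_normed_vector \<Rightarrow>\<^sub>L real"
  assumes nz: "\<phi> \<noteq> 0" and e: "0 < e"
  shows "\<exists>u. norm u = 1 \<and> norm \<phi> - e < blinfun_apply \<phi> u"
proof (rule ccontr)
  assume "\<not> ?thesis"
  hence A: "\<And>u. norm u = 1 \<Longrightarrow> blinfun_apply \<phi> u \<le> norm \<phi> - e" by force
  have A2: "\<bar>blinfun_apply \<phi> u\<bar> \<le> norm \<phi> - e" if "norm u = 1" for u
  proof -
    have "blinfun_apply \<phi> (- u) \<le> norm \<phi> - e" using A[of "- u"] that by simp
    thus ?thesis using A[OF that] by (simp add: blinfun.minus_right)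
  qed
  obtain x where x: "blinfun_apply \<phi> x \<noteq> 0" using nz by (metis blinfun_eqI zero_blinfun.rep_eq)
  hence "x \<noteq> 0" by auto
  hence "norm (x /\<^sub>R norm x) = 1" by simp
  hence "0 \<le> norm \<phi> - e" using A2 by (meson abs_ge_zero order_trans)
  hence "norm \<phi> \<le> norm \<phi> - e" using norm_le_from_unit A2 by blast
  thus False using e by simp
qed

lemma UC_attain:
  fixes \<phi> :: "'b::banach \<Rightarrow>\<^sub>L real"
  assumes UC: "uniformly_convex TYPE('b)" and nz: "\<phi> \<noteq> 0"
  shows "\<exists>v. norm v = 1 \<and> blinfun_apply \<phi> v = norm \<phi>"
proof -
  define N where "N = norm \<phi>"
  have N: "0 < N" using nz by (simp add: N_def)
  have "\<forall>n. \<exists>u. norm u = 1 \<and> N - inverse (real (Suc n)) < blinfun_apply \<phi> u"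
    using approx_norming[OF nz] unfolding N_def by simp
  then obtain u where u: "\<And>n. norm (u n) = 1" "\<And>n. N - inverse (real (Suc n)) < blinfun_apply \<phi> (u n)"
    by metis
  have upper: "blinfun_apply \<phi> w \<le> N * norm w" for w
    using norm_blinfun[of \<phi> w] unfolding N_def by simp
  have "Cauchy u"
  proof (rule metric_CauchyI)
    fix \<epsilon> :: real assume \<epsilon>: "0 < \<epsilon>"
    from UC \<epsilon> obtain \<delta> where \<delta>: "0 < \<delta>" and H: "\<And>x y. norm (x::'b) \<le> 1 \<Longrightarrow> norm y \<le> 1 \<Longrightarrow> \<epsilon> \<le> norm (x - y)
        \<Longrightarrow> norm ((x + y) /\<^sub>R 2) \<le> 1 - \<delta>"
      unfolding uniformly_convex_def by metis
    obtain M where M: "inverse (real (Suc M)) < N * \<delta>"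
      using reals_Archimedean[of "N * \<delta>"] N \<delta> by auto
    show "\<exists>M. \<forall>m\<ge>M. \<forall>n\<ge>M. dist (u m) (u n) < \<epsilon>"
    proof (intro exI allI impI)
      fix m n assume mM: "M \<le> m" and nM: "M \<le> n"
      have im: "inverse (real (Suc m)) \<le> inverse (real (Suc M))" using mM by (simp add: le_imp_inverse_le)
      have inn: "inverse (real (Suc n)) \<le> inverse (real (Suc M))" using nM by (simp add: le_imp_inverse_le)
      have "blinfun_apply \<phi> ((u m + u n) /\<^sub>R 2) = (blinfun_apply \<phi> (u m) + blinfun_apply \<phi> (u n)) / 2"
        by (simp add: blinfun.add_right blinfun.scaleR_right)
      also have "\<dots> > N - N * \<delta>"
      proof -
        have "2 * N - 2 * (N * \<delta>) < blinfun_apply \<phi> (u m) + blinfun_apply \<phi> (u n)"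
          using u(2)[of m] u(2)[of n] im inn M by linarith
        thus ?thesis by (simp add: field_simps)
      qed
      finally have "N - N * \<delta> < N * norm ((u m + u n) /\<^sub>R 2)" using upper by (meson less_le_trans)
      hence "N * (1 - \<delta>) < N * norm ((u m + u n) /\<^sub>R 2)" by (simp add: algebra_simps)
      hence "1 - \<delta> < norm ((u m + u n) /\<^sub>R 2)" using N by simp
      hence "\<not> \<epsilon> \<le> norm (u m - u n)" using H[of "u m" "u n"] u(1) by force
      thus "dist (u m) (u n) < \<epsilon>" by (simp add: dist_norm)
    qed
  qed
  then obtain v where v: "u \<longlonglongrightarrow> v" using Cauchy_convergent_iff convergent_def by blast
  have "(\<lambda>n. norm (u n)) \<longlonglongrightarrow> norm v" using v by (rule tendsto_norm)
  hence nv: "norm v = 1" using u(1) by (simp add: LIMSEQ_const_iff)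
  have l1: "(\<lambda>n. blinfun_apply \<phi> (u n)) \<longlonglongrightarrow> blinfun_apply \<phi> v"
    by (rule bounded_linear.tendsto[OF blinfun.bounded_linear_right v])
  have l2: "(\<lambda>n. blinfun_apply \<phi> (u n)) \<longlonglongrightarrow> N"
  proof (rule tendsto_sandwich[where f="\<lambda>n. N + - inverse (real (Suc n))" and h="\<lambda>n. N"])
    show "\<forall>\<^sub>F n in sequentially. N + - inverse (real (Suc n)) \<le> blinfun_apply \<phi> (u n)"
      using u(2) by (auto intro!: always_eventually less_imp_le)
    show "\<forall>\<^sub>F n in sequentially. blinfun_apply \<phi> (u n) \<le> N"
      using upper u(1) by (auto intro!: always_eventually) (metis mult.right_neutral)
    show "(\<lambda>n. N + - inverse (real (Suc n))) \<longlonglongrightarrow> N" by (rule LIMSEQ_inverse_real_of_nat_add_minus)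
  qed simp
  have "blinfun_apply \<phi> v = N" using LIMSEQ_unique[OF l1 l2] .
  thus ?thesis using nv unfolding N_def by blast
qed



lemma dual_UC:
  assumes US: "uniformly_smooth TYPE('a::real_normed_vector)"
  shows "uniformly_convex TYPE('a \<Rightarrow>\<^sub>L real)"
  unfolding uniformly_convex_def
proof (intro allI impI)
  fix \<epsilon> :: real assume \<epsilon>: "0 < \<epsilon>"
  have e8: "0 < \<epsilon> / 8" using \<epsilon> by simp
  obtain d where d: "0 < d" and H: "\<And>z w t. (z::'a) \<noteq> 0 \<Longrightarrow> 0 < t \<Longrightarrow> t * norm w < d * norm z \<Longrightarrow>
     norm (z + t *\<^sub>R w) + norm (z - t *\<^sub>R w) \<le> 2 * norm z + 2 * (\<epsilon> / 8) * t * norm w"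
    using US_sum[OF US e8] by metis
  define t where "t = min (d / 2) 1"
  have t: "0 < t" "t < d" "t \<le> 1" using d by (auto simp: t_def)
  show "\<exists>\<delta>>0. \<forall>f g :: 'a \<Rightarrow>\<^sub>L real. norm f \<le> 1 \<and> norm g \<le> 1 \<and> \<epsilon> \<le> norm (f - g) \<longrightarrow>
          norm ((f + g) /\<^sub>R 2) \<le> 1 - \<delta>"
  proof (intro exI[of _ "t * \<epsilon> / 8"] conjI allI impI)
    show "0 < t * \<epsilon> / 8" using t \<epsilon> by simp
    fix f g :: "'a \<Rightarrow>\<^sub>L real"
    assume fg: "norm f \<le> 1 \<and> norm g \<le> 1 \<and> \<epsilon> \<le> norm (f - g)"
    have "f - g \<noteq> 0" using fg \<epsilon> by auto
    then obtain x where x: "norm x = 1" "norm (f - g) - \<epsilon> / 2 < blinfun_apply (f - g) x"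
      using approx_norming[of "f - g" "\<epsilon> / 2"] \<epsilon> by auto
    have fgx: "\<epsilon> / 2 < blinfun_apply (f - g) x" using x fg by linarith
    have "norm (f - g) \<le> 2" using fg norm_triangle_ineq4[of f g] by linarith
    hence e2: "\<epsilon> \<le> 2" using fg by linarith
    have main: "norm (f + g) \<le> 2 - t * \<epsilon> / 4"
    proof (cases "f + g = 0")
      case True
      have "t * \<epsilon> \<le> 1 * 2" using t e2 \<epsilon> by (intro mult_mono) auto
      thus ?thesis using True by simp
    next
      case False
      show ?thesis
      proof (rule field_le_epsilon)
        fix \<eta> :: real assume \<eta>: "0 < \<eta>"
        obtain y where y: "norm y = 1" "norm (f + g) - \<eta> < blinfun_apply (f + g) y"
          using approx_norming[OF False \<eta>] by auto
        have yne: "y \<noteq> 0" using y by auto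
        have "t * norm x < d * norm y" using x y t by simp
        from H[OF yne t(1) this] x y
        have h: "norm (y + t *\<^sub>R x) + norm (y - t *\<^sub>R x) \<le> 2 + 2 * (\<epsilon> / 8) * t" by simp
        have bf: "blinfun_apply f w \<le> norm w" "blinfun_apply g w \<le> norm w" for w
        proof -
          have "blinfun_apply f w \<le> norm f * norm w" using norm_blinfun[of f w] by simp
          also have "\<dots> \<le> norm w" using fg by (simp add: mult_left_le_one_le)
          finally show "blinfun_apply f w \<le> norm w" .
          have "blinfun_apply g w \<le> norm g * norm w" using norm_blinfun[of g w] by simp
          also have "\<dots> \<le> norm w" using fg by (simp add: mult_left_le_one_le)
          finally show "blinfun_apply g w \<le> norm w" .
        qed
        have "blinfun_apply (f + g) y + t * blinfun_apply (f - g) x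
              = blinfun_apply f (y + t *\<^sub>R x) + blinfun_apply g (y - t *\<^sub>R x)"
          by (simp add: blinfun.add_right blinfun.diff_right blinfun.scaleR_right blinfun.add_left blinfun.diff_left algebra_simps)
        also have "\<dots> \<le> norm (y + t *\<^sub>R x) + norm (y - t *\<^sub>R x)" using bf add_mono by blast
        finally have "blinfun_apply (f + g) y + t * blinfun_apply (f - g) x \<le> 2 + 2 * (\<epsilon> / 8) * t" using h by linarith
        moreover have "t * (\<epsilon> / 2) \<le> t * blinfun_apply (f - g) x" using fgx t by simp
        ultimately show "norm (f + g) \<le> 2 - t * \<epsilon> / 4 + \<eta>" using y by (simp add: algebra_simps)
      qed
    qed
    have "norm ((f + g) /\<^sub>R 2) = norm (f + g) / 2" by simp
    thus "norm ((f + g) /\<^sub>R 2) \<le> 1 - t * \<epsilon> / 8" using main by linarith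
  qed
qed



lemma reflexive_eval:
  fixes \<Psi> :: "('a::banach \<Rightarrow>\<^sub>L real) \<Rightarrow>\<^sub>L real"
  assumes UC: "uniformly_convex TYPE('a)" and US: "uniformly_smooth TYPE('a)"
  shows "\<exists>v. \<forall>g. blinfun_apply \<Psi> g = blinfun_apply g v"
proof (cases "\<Psi> = 0")
  case True thus ?thesis by (intro exI[of _ 0]) simp
next
  case False
  define P where "P = norm \<Psi>"
  have P: "0 < P" using False by (simp add: P_def)
  obtain f where f: "norm f = 1" "blinfun_apply \<Psi> f = P"
    using UC_attain[OF dual_UC[OF US] False] unfolding P_def by blast
  have "f \<noteq> 0" using f by auto
  then obtain v0 where v0: "norm v0 = 1" "blinfun_apply f v0 = 1"
    using UC_attain[OF UC] f(1) by metis
  have bf: "blinfun_apply f w \<le> norm w" for w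
    using norm_blinfun[of f w] f(1) by simp
  have claim: "\<bar>blinfun_apply \<Psi> g - P * blinfun_apply g v0\<bar> \<le> P * norm g * \<epsilon>"
    if \<epsilon>: "0 < \<epsilon>" and gnz: "g \<noteq> 0" for g \<epsilon>
  proof -
    from UC \<epsilon> obtain \<delta>0 where \<delta>0: "0 < \<delta>0" and H0: "\<And>x y. norm (x::'a) \<le> 1 \<Longrightarrow> norm y \<le> 1 \<Longrightarrow> \<epsilon> \<le> norm (x - y)
        \<Longrightarrow> norm ((x + y) /\<^sub>R 2) \<le> 1 - \<delta>0"
      unfolding uniformly_convex_def by metis
    define \<delta> where "\<delta> = min \<delta>0 1"
    have \<delta>: "0 < \<delta>" "\<delta> \<le> 1" using \<delta>0 by (auto simp: \<delta>_def)
    have H: "norm ((x + y) /\<^sub>R 2) \<le> 1 - \<delta>" if "norm (x::'a) \<le> 1" "norm y \<le> 1" "\<epsilon> \<le> norm (x - y)" for x y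
      using H0[OF that] by (simp add: \<delta>_def)
    define G where "G = norm g"
    have G: "0 < G" using gnz by (simp add: G_def)
    define t where "t = \<delta> / (2 * G)"
    have t: "0 < t" using \<delta> G by (simp add: t_def)
    have tG: "t * G = \<delta> / 2" using G by (simp add: t_def)
    have bnd: "norm (f + \<tau> *\<^sub>R g) \<le> 1 + \<tau> * blinfun_apply g v0 + t * G * \<epsilon>" if \<tau>: "\<bar>\<tau>\<bar> = t" for \<tau>
    proof -
      define B where "B = 1 + \<tau> * blinfun_apply g v0 + t * G * \<epsilon>"
      have gv0: "\<bar>blinfun_apply g v0\<bar> \<le> G" using norm_blinfun[of g v0] v0 by (simp add: G_def)
      have gu: "\<bar>blinfun_apply g w\<bar> \<le> G * norm w" for w using norm_blinfun[of g w] by (simp add: G_def)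
      have tgv: "\<bar>\<tau> * blinfun_apply g v0\<bar> \<le> t * G" using gv0 \<tau> t by (simp add: abs_mult mult_mono)
      have Bge: "1 - \<delta> / 2 \<le> B" using tgv tG t G \<epsilon> unfolding B_def
        by (smt (verit) mult_pos_pos)
      have key: "blinfun_apply (f + \<tau> *\<^sub>R g) u \<le> B" if u: "norm u = 1" for u
      proof (cases "norm (u - v0) < \<epsilon>")
        case True
        have "\<tau> * blinfun_apply g u - \<tau> * blinfun_apply g v0 = \<tau> * blinfun_apply g (u - v0)"
          by (simp add: blinfun.diff_right algebra_simps)
        also have "\<dots> \<le> \<bar>\<tau>\<bar> * (G * norm (u - v0))"
          using gu[of "u - v0"] by (metis abs_ge_self abs_mult mult_left_mono abs_ge_zero order_trans)
        also have "\<dots> \<le> t * (G * \<epsilon>)" using \<tau> t G True by (simp add: less_imp_le)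
        finally have "\<tau> * blinfun_apply g u \<le> \<tau> * blinfun_apply g v0 + t * G * \<epsilon>" by simp
        moreover have "blinfun_apply f u \<le> 1" using bf[of u] u by simp
        ultimately show ?thesis unfolding B_def by (simp add: blinfun.add_left blinfun.scaleR_left)
      next
        case False
        hence "norm ((u + v0) /\<^sub>R 2) \<le> 1 - \<delta>" using H[of u v0] u v0 by simp
        moreover have "blinfun_apply f ((u + v0) /\<^sub>R 2) = (blinfun_apply f u + 1) / 2"
          using v0 by (simp add: blinfun.add_right blinfun.scaleR_right)
        ultimately have "(blinfun_apply f u + 1) / 2 \<le> 1 - \<delta>" using bf[of "(u + v0) /\<^sub>R 2"] by simp
        hence fu: "blinfun_apply f u \<le> 1 - 2 * \<delta>" by simp
        have "\<bar>\<tau> * blinfun_apply g u\<bar> \<le> t * G" using gu[of u] u \<tau> t by (simp add: abs_mult mult_mono)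
        hence "\<tau> * blinfun_apply g u \<le> \<delta> / 2" using tG by simp
        hence "blinfun_apply f u + \<tau> * blinfun_apply g u \<le> 1 - \<delta> / 2" using fu \<delta> by linarith
        thus ?thesis using Bge by (simp add: blinfun.add_left blinfun.scaleR_left)
      qed
      have "norm (f + \<tau> *\<^sub>R g) \<le> B"
      proof (rule norm_le_from_unit)
        show "0 \<le> B" using Bge \<delta> by simp
        fix u :: 'a assume u: "norm u = 1"
        have "- blinfun_apply (f + \<tau> *\<^sub>R g) u = blinfun_apply (f + \<tau> *\<^sub>R g) (- u)"
          by (simp add: blinfun.minus_right)
        also have "\<dots> \<le> B" using key[of "- u"] u by simp
        finally show "\<bar>blinfun_apply (f + \<tau> *\<^sub>R g) u\<bar> \<le> B" using key[OF u] by simp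
      qed
      thus ?thesis unfolding B_def .
    qed
    have psi: "P + \<tau> * blinfun_apply \<Psi> g \<le> P * (1 + \<tau> * blinfun_apply g v0 + t * G * \<epsilon>)" if \<tau>: "\<bar>\<tau>\<bar> = t" for \<tau>
    proof -
      have "P + \<tau> * blinfun_apply \<Psi> g = blinfun_apply \<Psi> (f + \<tau> *\<^sub>R g)"
        using f by (simp add: blinfun.add_right blinfun.scaleR_right)
      also have "\<dots> \<le> P * norm (f + \<tau> *\<^sub>R g)" using norm_blinfun[of \<Psi> "f + \<tau> *\<^sub>R g"] by (simp add: P_def)
      also have "\<dots> \<le> P * (1 + \<tau> * blinfun_apply g v0 + t * G * \<epsilon>)" using bnd[OF \<tau>] P by simp
      finally show ?thesis .
    qed
    have p1: "t * blinfun_apply \<Psi> g \<le> t * (P * blinfun_apply g v0 + P * G * \<epsilon>)"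
      using psi[of t] t by (simp add: algebra_simps)
    have p2: "t * (P * blinfun_apply g v0 - P * G * \<epsilon>) \<le> t * blinfun_apply \<Psi> g"
      using psi[of "- t"] t by (simp add: algebra_simps)
    have "blinfun_apply \<Psi> g \<le> P * blinfun_apply g v0 + P * G * \<epsilon>" using p1 t by simp
    moreover have "P * blinfun_apply g v0 - P * G * \<epsilon> \<le> blinfun_apply \<Psi> g" using p2 t by simp
    ultimately show ?thesis unfolding G_def by (simp add: abs_le_iff algebra_simps)
  qed
  have eq: "blinfun_apply \<Psi> g = P * blinfun_apply g v0" for g
  proof (cases "g = 0")
    case True thus ?thesis by simp
  next
    case False
    have "\<bar>blinfun_apply \<Psi> g - P * blinfun_apply g v0\<bar> \<le> 0 + e" if e: "0 < e" for e
    proof -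
      have PG: "0 < P * norm g" using P False by simp
      have "0 < e / (P * norm g)" using e PG by simp
      from claim[OF this False] show ?thesis using PG P False by simp
    qed
    hence "\<bar>blinfun_apply \<Psi> g - P * blinfun_apply g v0\<bar> \<le> 0" by (rule field_le_epsilon)
    thus ?thesis by simp
  qed
  show ?thesis
    by (intro exI[of _ "P *\<^sub>R v0"] allI) (simp add: eq blinfun.scaleR_right)
qed



lemma dual_lower:
  assumes US: "uniformly_smooth TYPE('a::real_normed_vector)" and z: "(z::'a) \<noteq> 0"
  shows "norm z + blinfun_apply (dual_elem z) u \<le> norm (z + u)"
proof -
  have "blinfun_apply (dual_elem z) (z + u) \<le> norm (z + u)"
    using norm_blinfun[of "dual_elem z" "z + u"] dual_elem_props[OF US z] by simp
  thus ?thesis using dual_elem_props[OF US z] by (simp add: blinfun.add_right)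
qed

theorem theorem3p8:
  fixes x :: "'a::banach" and xs :: "nat \<Rightarrow> 'a"
  assumes "uniformly_convex TYPE('a)" and "uniformly_smooth TYPE('a)"
    and "bounded (range xs)"
    and "liminf (\<lambda>k. ereal (norm (xs k - x))) > 0"
  shows "Delta_converges xs x \<longleftrightarrow> weakly_converges (\<lambda>k. dual_elem (xs k - x)) 0"
proof -
  note UC = assms(1) and US = assms(2)
  define z where "z k = xs k - x" for k
  define f where "f k = dual_elem (z k)" for k
  obtain c where c0: "0 < ereal c" and cl: "ereal c < liminf (\<lambda>k. ereal (norm (xs k - x)))"
    using ereal_dense2[OF assms(4)] by blast
  have c: "0 < c" using c0 by simp
  have evc: "eventually (\<lambda>k. c < norm (z k)) sequentially"
    using less_LiminfD[OF cl] unfolding z_def by simp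
  have evnz: "eventually (\<lambda>k. z k \<noteq> 0) sequentially"
    using evc by eventually_elim (use c in auto)
  have lower: "norm (z k) + blinfun_apply (f k) u \<le> norm (z k + u)" if "z k \<noteq> 0" for k u
    unfolding f_def by (rule dual_lower[OF US that])
  show ?thesis
  proof
    assume D: "Delta_converges xs x"
    have up: "eventually (\<lambda>k. blinfun_apply (f k) w < \<epsilon>) sequentially" if \<epsilon>: "0 < \<epsilon>" for w \<epsilon>
    proof -
      define e where "e = \<epsilon> / (1 + 2 * norm w)"
      have nw: "0 < 1 + 2 * norm w" using norm_ge_zero[of w] by linarith
      have e: "0 < e" using \<epsilon> nw by (simp add: e_def)
      have e\<epsilon>: "e * (1 + 2 * norm w) = \<epsilon>" using nw by (simp add: e_def)
      obtain d where d: "0 < d" and H: "\<And>z w t. (z::'a) \<noteq> 0 \<Longrightarrow> 0 < t \<Longrightarrow> t * norm w < d * norm z \<Longrightarrow>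
         norm (z + t *\<^sub>R w) + norm (z - t *\<^sub>R w) \<le> 2 * norm z + 2 * e * t * norm w"
        using US_sum[OF US e] by metis
      define t where "t = d * c / (norm w + 1)"
      have nw1: "0 < norm w + 1" using norm_ge_zero[of w] by linarith
      have t: "0 < t" unfolding t_def using d c nw1 by (intro divide_pos_pos mult_pos_pos)
      have tw: "t * norm w < d * c"
      proof -
        have "t * norm w < t * (norm w + 1)" using t by simp
        also have "\<dots> = d * c" using nw1 by (simp add: t_def)
        finally show ?thesis .
      qed
      have "limsup (\<lambda>k. ereal (norm (xs k - x) - norm (xs k - (x + t *\<^sub>R w)))) \<le> 0"
        using D unfolding Delta_converges_def by blast
      also have "\<dots> < ereal (t * e)" using t e by simp
      finally have "eventually (\<lambda>k. ereal (norm (xs k - x) - norm (xs k - (x + t *\<^sub>R w))) < ereal (t * e)) sequentially"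
        by (rule Limsup_lessD)
      hence evD: "eventually (\<lambda>k. norm (z k) - norm (z k - t *\<^sub>R w) < t * e) sequentially"
        unfolding z_def by (simp add: algebra_simps)
      show ?thesis using evD evc
      proof eventually_elim
        case (elim k)
        have znz: "z k \<noteq> 0" using elim c by auto
        have "t * norm w < d * norm (z k)" using tw elim d by (smt (verit) mult_strict_left_mono)
        from H[OF znz t this]
        have h: "norm (z k + t *\<^sub>R w) + norm (z k - t *\<^sub>R w) \<le> 2 * norm (z k) + 2 * e * t * norm w" .
        have l: "norm (z k) + t * blinfun_apply (f k) w \<le> norm (z k + t *\<^sub>R w)"
          using lower[OF znz, of "t *\<^sub>R w"] by (simp add: blinfun.scaleR_right)
        have "t * blinfun_apply (f k) w < t * e + 2 * e * t * norm w" using h l elim(1) by linarith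
        also have "\<dots> = t * (e * (1 + 2 * norm w))" by (simp add: algebra_simps)
        finally have "t * blinfun_apply (f k) w < t * \<epsilon>" using e\<epsilon> by simp
        thus ?case using t by simp
      qed
    qed
    have wk: "(\<lambda>k. blinfun_apply (f k) w) \<longlonglongrightarrow> 0" for w
    proof (rule tendstoI)
      fix \<epsilon> :: real assume \<epsilon>: "0 < \<epsilon>"
      show "eventually (\<lambda>k. dist (blinfun_apply (f k) w) 0 < \<epsilon>) sequentially"
        using up[OF \<epsilon>, of w] up[OF \<epsilon>, of "- w"]
      proof eventually_elim
        case (elim k) thus ?case by (simp add: blinfun.minus_right)
      qed
    qed
    show "weakly_converges (\<lambda>k. dual_elem (xs k - x)) 0"
      unfolding weakly_converges_def
    proof
      fix \<Psi> :: "('a \<Rightarrow>\<^sub>L real) \<Rightarrow>\<^sub>L real"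
      obtain v where v: "\<And>g. blinfun_apply \<Psi> g = blinfun_apply g v" using reflexive_eval[OF UC US] by blast
      show "(\<lambda>k. blinfun_apply \<Psi> (dual_elem (xs k - x))) \<longlonglongrightarrow> blinfun_apply \<Psi> 0"
        using wk[of v] by (simp add: v f_def z_def)
    qed
  next
    assume W: "weakly_converges (\<lambda>k. dual_elem (xs k - x)) 0"
    show "Delta_converges xs x"
      unfolding Delta_converges_def
    proof
      fix y
      define w where "w = y - x"
      define \<Psi> where "\<Psi> = Blinfun (\<lambda>g::'a \<Rightarrow>\<^sub>L real. blinfun_apply g w)"
      have \<Psi>: "blinfun_apply \<Psi> g = blinfun_apply g w" for g
        unfolding \<Psi>_def by (subst bounded_linear_Blinfun_apply) (auto intro: blinfun.bounded_linear_left)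
      have "(\<lambda>k. blinfun_apply \<Psi> (dual_elem (xs k - x))) \<longlonglongrightarrow> blinfun_apply \<Psi> 0"
        using W[unfolded weakly_converges_def, rule_format, of \<Psi>] .
      hence conv: "(\<lambda>k. blinfun_apply (f k) w) \<longlonglongrightarrow> 0"
        by (simp add: \<Psi> f_def z_def)
      show "limsup (\<lambda>k. ereal (norm (xs k - x) - norm (xs k - y))) \<le> 0"
      proof (rule ereal_le_epsilon2)
        fix e :: real assume e: "0 < e"
        have ev: "eventually (\<lambda>k. blinfun_apply (f k) w < e) sequentially"
          using order_tendstoD(2)[OF conv e] .
        have "eventually (\<lambda>k. ereal (norm (xs k - x) - norm (xs k - y)) \<le> ereal e) sequentially"
          using ev evnz
        proof eventually_elim
          case (elim k)
          have "norm (z k) + blinfun_apply (f k) (- w) \<le> norm (z k + - w)" using lower[OF elim(2)] .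
          moreover have "z k + - w = xs k - y" by (simp add: z_def w_def)
          moreover have "blinfun_apply (f k) (- w) = - blinfun_apply (f k) w" by (simp add: blinfun.minus_right)
          ultimately have "norm (z k) - norm (xs k - y) \<le> blinfun_apply (f k) w" by simp
          hence "norm (xs k - x) - norm (xs k - y) \<le> blinfun_apply (f k) w" by (simp add: z_def)
          thus ?case using elim(1) by simp
        qed
        hence "limsup (\<lambda>k. ereal (norm (xs k - x) - norm (xs k - y))) \<le> ereal e"
          by (rule Limsup_bounded)
        thus "limsup (\<lambda>k. ereal (norm (xs k - x) - norm (xs k - y))) \<le> 0 + ereal e" by simp
      qed
    qed
  qed
qed


end
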